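(* Let $k\ge 1$ and $p\ge k+1$ be integers and let $G$ be a graph with a $k$-degenerate ordering $(v_1,\dots,v_n)$ of $V(G)$. If there exists $\ell\in[n]$ such that $\{v_1,\dots,v_\ell\}$ is a vertex cover of $G$, then $\mathrm{id}^{\leq p}(G)\le \ell$. In particular, every $k$-degenerate graph $G$ satisfies $\mathrm{id}^{\leq p}(G)\le |V(G)|-1$ for every $p\ge k+1$.
   Context: A $k$-degenerate ordering of $G$ is an ordering $(v_1,\dots,v_n)$ of $V(G)$ such that each $v_i$ has at most $k$ neighbours in $\{v_{i+1},\dots,v_n\}$; $G$ is $k$-degenerate if it has such an ordering. For an oriented graph $D$ and $X\subseteq V(D)$, the inversion of $X$ reverses every arc with both endvertices in $X$; a $(\leq p)$-inversion is the inversion of a set of at most $p$ vertices. $\mathrm{id}^{\leq p}(G)$ is the maximum, over all ordered pairs $(\vec G_1,\vec G_2)$ of orientations of $G$, of the minimum number of $(\leq p)$-inversions transforming $\vec G_1$ into $\vec G_2$. *)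

theory Defs
  imports Main "HOL-Library.Extended_Nat"
begin

definition simple_graph :: "'a set \<Rightarrow> 'a set set \<Rightarrow> bool" where
  "simple_graph V E \<longleftrightarrow> finite V \<and>
     (\<forall>e\<in>E. \<exists>u v. u \<noteq> v \<and> u \<in> V \<and> v \<in> V \<and> e = {u, v})"

definition degenerate_ordering :: "nat \<Rightarrow> 'a set \<Rightarrow> 'a set set \<Rightarrow> 'a list \<Rightarrow> bool" where
  "degenerate_ordering k V E vs \<longleftrightarrow> distinct vs \<and> set vs = V \<and>
     (\<forall>i < length vs. card {j. i < j \<and> j < length vs \<and> {vs ! i, vs ! j} \<in> E} \<le> k)"

definition k_degenerate :: "nat \<Rightarrow> 'a set \<Rightarrow> 'a set set \<Rightarrow> bool" where
  "k_degenerate k V E \<longleftrightarrow> (\<exists>vs. degenerate_ordering k V E vs)"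

definition vertex_cover :: "'a set set \<Rightarrow> 'a set \<Rightarrow> bool" where
  "vertex_cover E S \<longleftrightarrow> (\<forall>e\<in>E. e \<inter> S \<noteq> {})"

definition orientation :: "'a set set \<Rightarrow> ('a \<times> 'a) set \<Rightarrow> bool" where
  "orientation E D \<longleftrightarrow> (\<forall>(u, v)\<in>D. {u, v} \<in> E \<and> u \<noteq> v) \<and>
     (\<forall>u v. {u, v} \<in> E \<and> u \<noteq> v \<longrightarrow> ((u, v) \<in> D \<longleftrightarrow> (v, u) \<notin> D))"

definition invert :: "'a set \<Rightarrow> ('a \<times> 'a) set \<Rightarrow> ('a \<times> 'a) set" where
  "invert X D = {(u, v) \<in> D. \<not> (u \<in> X \<and> v \<in> X)} \<union>
                {(v, u) | u v. (u, v) \<in> D \<and> u \<in> X \<and> v \<in> X}"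

definition invert_seq :: "'a set list \<Rightarrow> ('a \<times> 'a) set \<Rightarrow> ('a \<times> 'a) set" where
  "invert_seq Xs D = foldl (\<lambda>D' X. invert X D') D Xs"

text \<open>Minimum number of (<= p)-inversions (subsets of V of size at most p) transforming D1 into D2;
  infinity if impossible.\<close>
definition inv_dist :: "nat \<Rightarrow> 'a set \<Rightarrow> ('a \<times> 'a) set \<Rightarrow> ('a \<times> 'a) set \<Rightarrow> enat" where
  "inv_dist p V D1 D2 = Inf {enat (length Xs) | Xs.
      (\<forall>X\<in>set Xs. X \<subseteq> V \<and> card X \<le> p) \<and> invert_seq Xs D1 = D2}"

definition inv_diameter :: "nat \<Rightarrow> 'a set \<Rightarrow> 'a set set \<Rightarrow> enat" where
  "inv_diameter p V E = Sup {inv_dist p V D1 D2 | D1 D2. orientation E D1 \<and> orientation E D2}"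

end

theory Submission
  imports Defs
begin

lemma edge_facts:
  assumes "simple_graph V E" "{u, v} \<in> E"
  shows "u \<noteq> v \<and> u \<in> V \<and> v \<in> V"
proof -
  obtain a b where "a \<noteq> b" "a \<in> V" "b \<in> V" "{u, v} = {a, b}"
    using assms unfolding simple_graph_def by blast
  then show ?thesis by (auto simp: doubleton_eq_iff)
qed

lemma orient_arc: "orientation E D \<Longrightarrow> (u, v) \<in> D \<Longrightarrow> {u, v} \<in> E \<and> u \<noteq> v"
  unfolding orientation_def by auto

lemma orient_flip: "orientation E D \<Longrightarrow> {u, v} \<in> E \<and> u \<noteq> v \<Longrightarrow> ((u, v) \<in> D \<longleftrightarrow> (v, u) \<notin> D)"
  unfolding orientation_def by blast

lemma invert_mem:
  "(a, b) \<in> invert X D \<longleftrightarrow> (if a \<in> X \<and> b \<in> X then (b, a) \<in> D else (a, b) \<in> D)"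
  unfolding invert_def by auto

lemma invert_orient:
  assumes "orientation E D"
  shows "orientation E (invert X D)"
  unfolding orientation_def
proof (intro conjI allI impI ballI)
  fix x assume "x \<in> invert X D"
  then obtain u v where x: "x = (u, v)" and "(u, v) \<in> invert X D" by (cases x) auto
  then have "(u, v) \<in> D \<or> (v, u) \<in> D" by (auto simp: invert_mem split: if_splits)
  then show "case x of (u, v) \<Rightarrow> {u, v} \<in> E \<and> u \<noteq> v"
    using orient_arc[OF assms, of u v] orient_arc[OF assms, of v u] x by (auto simp: insert_commute)
next
  fix u v assume "{u, v} \<in> E \<and> u \<noteq> v"
  then have "(u, v) \<in> D \<longleftrightarrow> (v, u) \<notin> D" "(v, u) \<in> D \<longleftrightarrow> (u, v) \<notin> D"
    using orient_flip[OF assms, of u v] orient_flip[OF assms, of v u] by (auto simp: insert_commute)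
  show "(u, v) \<in> invert X D \<longleftrightarrow> (v, u) \<notin> invert X D"
  proof (cases "u \<in> X \<and> v \<in> X")
    case True
    then have "(u,v)\<in>invert X D \<longleftrightarrow> (v,u)\<in>D" "(v,u)\<in>invert X D \<longleftrightarrow> (u,v)\<in>D"
      by (simp_all add: invert_mem)
    then show ?thesis using \<open>(v, u) \<in> D \<longleftrightarrow> (u, v) \<notin> D\<close> by blast
  next
    case False
    then have "(u,v)\<in>invert X D \<longleftrightarrow> (u,v)\<in>D" "(v,u)\<in>invert X D \<longleftrightarrow> (v,u)\<in>D"
      by (auto simp add: invert_mem)
    then show ?thesis using \<open>(u, v) \<in> D \<longleftrightarrow> (v, u) \<notin> D\<close> by blast
  qed
qed

lemma main_lemma:
  assumes G: "simple_graph V E"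
  shows "\<lbrakk>distinct ws; set ws \<subseteq> V; set ws \<inter> B = {}; \<forall>e\<in>E. e \<inter> (B \<union> set ws) \<noteq> {};
   orientation E D; orientation E D2;
   \<forall>u v. {u,v}\<in>E \<and> u\<in>B \<longrightarrow> ((u,v)\<in>D \<longleftrightarrow> (u,v)\<in>D2);
   \<forall>i<length ws. card ({u. {ws!i,u}\<in>E} - B - set (take i ws)) \<le> k \<rbrakk>
  \<Longrightarrow> \<exists>Xs. length Xs = length ws \<and> (\<forall>X\<in>set Xs. X \<subseteq> V \<and> card X \<le> k+1)
        \<and> invert_seq Xs D = D2"
proof (induction ws arbitrary: B D)
  case Nil
  have ag: "(u, v) \<in> D \<longleftrightarrow> (u, v) \<in> D2" if "{u, v} \<in> E" for u v
  proof -
    have uv: "u \<noteq> v" using edge_facts[OF G that] by simp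
    have "u \<in> B \<or> v \<in> B" using Nil(4) that by auto
    moreover have "{v, u} \<in> E" using that by (simp add: insert_commute)
    moreover have "(u, v) \<in> D \<longleftrightarrow> (v, u) \<notin> D" "(u, v) \<in> D2 \<longleftrightarrow> (v, u) \<notin> D2"
      using orient_flip[OF Nil(5)] orient_flip[OF Nil(6)] that uv by blast+
    moreover have "u \<in> B \<Longrightarrow> ((u, v) \<in> D \<longleftrightarrow> (u, v) \<in> D2)" using Nil(7) that by blast
    moreover have "v \<in> B \<Longrightarrow> ((v, u) \<in> D \<longleftrightarrow> (v, u) \<in> D2)" using Nil(7) \<open>{v, u} \<in> E\<close> by blast
    ultimately show ?thesis by blast
  qed
  have "D = D2"
  proof (intro set_eqI)
    fix x show "x \<in> D \<longleftrightarrow> x \<in> D2"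
    proof (cases x)
      case (Pair u v)
      show ?thesis
      proof (cases "{u, v} \<in> E")
        case True then show ?thesis using ag Pair by simp
      next
        case False then show ?thesis using orient_arc[OF Nil(5)] orient_arc[OF Nil(6)] Pair by blast
      qed
    qed
  qed
  then show ?case by (intro exI[of _ "[]"]) (simp add: invert_seq_def)
next
  case (Cons w ws)
  define N where "N = {u. {w, u} \<in> E}"
  define S where "S = {u. {w, u} \<in> E \<and> u \<notin> B \<and> ((w, u) \<in> D \<longleftrightarrow> (w, u) \<notin> D2)}"
  define X where "X = insert w S"
  define D' where "D' = invert X D"
  have wV: "w \<in> V" using Cons.prems(2) by simp
  have wB: "w \<notin> B" using Cons.prems(3) by simp
  have NV: "N \<subseteq> V" unfolding N_def using edge_facts[OF G] by blast
  have finV: "finite V" using G unfolding simple_graph_def by simp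
  have SN: "S \<subseteq> N - B" unfolding S_def N_def by auto
  have "card (N - B) \<le> k" using Cons.prems(8)[rule_format, of 0] unfolding N_def by simp
  moreover have fNB: "finite (N - B)" using NV finV by (meson Diff_subset finite_subset subset_trans)
  ultimately have cS: "card S \<le> k"
    using card_mono[OF _ SN] by linarith
  have XV: "X \<subseteq> V" unfolding X_def using wV SN NV by auto
  have cX: "card X \<le> k + 1"
  proof -
    have "finite S" using finite_subset[OF SN fNB] .
    then have "card X \<le> card S + 1" unfolding X_def by (simp add: card_insert_if)
    then show ?thesis using cS by simp
  qed
  have oD': "orientation E D'" unfolding D'_def by (rule invert_orient[OF Cons.prems(5)])
  have XB: "X \<inter> B = {}" unfolding X_def S_def using wB by auto
  have wS: "w \<notin> S" unfolding S_def using edge_facts[OF G] by blast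
  have agree: "\<forall>u v. {u,v}\<in>E \<and> u\<in>insert w B \<longrightarrow> ((u,v)\<in>D' \<longleftrightarrow> (u,v)\<in>D2)"
  proof (intro allI impI)
    fix u v assume a: "{u,v}\<in>E \<and> u\<in>insert w B"
    have uv: "u \<noteq> v" using edge_facts[OF G] a by blast
    have vu: "{v, u} \<in> E" using a by (simp add: insert_commute)
    have oD: "(u, v) \<in> D \<longleftrightarrow> (v, u) \<notin> D" "(u, v) \<in> D2 \<longleftrightarrow> (v, u) \<notin> D2"
      using orient_flip[OF Cons.prems(5)] orient_flip[OF Cons.prems(6)] a uv by blast+
    show "(u,v)\<in>D' \<longleftrightarrow> (u,v)\<in>D2"
    proof (cases "u \<in> B")
      case True
      then have "u \<notin> X" using XB by auto
      then show ?thesis unfolding D'_def using Cons.prems(7) a True by (simp add: invert_mem)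
    next
      case False
      then have uw: "u = w" using a by simp
      show ?thesis
      proof (cases "v \<in> B")
        case True
        then have "v \<notin> X" using XB by auto
        moreover have "(v,u)\<in>D \<longleftrightarrow> (v,u)\<in>D2" using Cons.prems(7) vu True by blast
        moreover have "(u,v)\<in>D' \<longleftrightarrow> (u,v)\<in>D" unfolding D'_def using \<open>v \<notin> X\<close> by (simp add: invert_mem)
        ultimately show ?thesis using oD by blast
      next
        case vB: False
        show ?thesis
        proof (cases "v \<in> S")
          case True
          then have "u \<in> X" "v \<in> X" unfolding X_def using uw by auto
          moreover have "(u, v) \<in> D \<longleftrightarrow> (u, v) \<notin> D2" using True uw unfolding S_def by simp
          moreover have "(u,v)\<in>D' \<longleftrightarrow> (v,u)\<in>D" unfolding D'_def using \<open>u \<in> X\<close> \<open>v \<in> X\<close> by (simp add: invert_mem)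
          ultimately show ?thesis using oD by blast
        next
          case False
          then have "v \<notin> X" unfolding X_def using uv uw by auto
          moreover have "(u, v) \<in> D \<longleftrightarrow> (u, v) \<in> D2" using False uw vB a unfolding S_def by auto
          ultimately show ?thesis unfolding D'_def by (simp add: invert_mem)
        qed
      qed
    qed
  qed
  have deg: "\<forall>i<length ws. card ({u. {ws!i,u}\<in>E} - insert w B - set (take i ws)) \<le> k"
  proof (intro allI impI)
    fix i assume "i < length ws"
    then have "Suc i < length (w#ws)" by simp
    from Cons.prems(8)[rule_format, OF this]
    have "card ({u. {(w#ws)!(Suc i),u}\<in>E} - B - set (take (Suc i) (w#ws))) \<le> k" .
    moreover have "{u. {(w#ws)!(Suc i),u}\<in>E} - B - set (take (Suc i) (w#ws))
       = {u. {ws!i,u}\<in>E} - insert w B - set (take i ws)" by auto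
    ultimately show "card ({u. {ws!i,u}\<in>E} - insert w B - set (take i ws)) \<le> k" by simp
  qed
  obtain Xs where Xs: "length Xs = length ws" "\<forall>X\<in>set Xs. X \<subseteq> V \<and> card X \<le> k+1"
      "invert_seq Xs D' = D2"
  proof -
    have p1: "distinct ws" using Cons.prems(1) by simp
    have p2: "set ws \<subseteq> V" using Cons.prems(2) by simp
    have p3: "set ws \<inter> insert w B = {}" using Cons.prems(1,3) by auto
    have p4: "\<forall>e\<in>E. e \<inter> (insert w B \<union> set ws) \<noteq> {}" using Cons.prems(4) by auto
    have "\<exists>Xs. length Xs = length ws \<and> (\<forall>X\<in>set Xs. X \<subseteq> V \<and> card X \<le> k+1)
        \<and> invert_seq Xs D' = D2" by (rule Cons.IH[OF p1 p2 p3 p4 oD' Cons.prems(6) agree deg])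
    then show ?thesis using that by (elim exE conjE) simp
  qed
  show ?case
  proof (intro exI[of _ "X # Xs"] conjI)
    show "length (X # Xs) = length (w # ws)" using Xs by simp
    show "\<forall>Y\<in>set (X # Xs). Y \<subseteq> V \<and> card Y \<le> k + 1" using Xs XV cX by simp
    show "invert_seq (X # Xs) D = D2" using Xs(3) unfolding invert_seq_def D'_def by simp
  qed
qed

lemma diam_bound:
  assumes G: "simple_graph V E" and O: "degenerate_ordering k V E vs" and p: "p \<ge> k + 1"
    and l: "l \<le> length vs" and C: "vertex_cover E (set (take l vs))"
  shows "inv_diameter p V E \<le> enat l"
  unfolding inv_diameter_def
proof (rule Sup_least)
  fix x assume "x \<in> {inv_dist p V D1 D2 |D1 D2. orientation E D1 \<and> orientation E D2}"
  then obtain D1 D2 where x: "x = inv_dist p V D1 D2" and o1: "orientation E D1"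
    and o2: "orientation E D2" by blast
  have dist: "distinct vs" and sV: "set vs = V"
    and dg: "\<forall>i < length vs. card {j. i < j \<and> j < length vs \<and> {vs ! i, vs ! j} \<in> E} \<le> k"
    using O unfolding degenerate_ordering_def by auto
  define ws where "ws = take l vs"
  have deg: "\<forall>i<length ws. card ({u. {ws!i,u}\<in>E} - {} - set (take i ws)) \<le> k"
  proof (intro allI impI)
    fix i assume "i < length ws"
    then have il: "i < l" "i < length vs" using l unfolding ws_def by auto
    have e1: "ws ! i = vs ! i" "take i ws = take i vs" using il unfolding ws_def by auto
    define J where "J = {j. i < j \<and> j < length vs \<and> {vs ! i, vs ! j} \<in> E}"
    have fJ: "finite J" unfolding J_def by (rule finite_subset[of _ "{..<length vs}"]) auto
    have sub: "{u. {vs!i,u}\<in>E} - set (take i vs) \<subseteq> (\<lambda>j. vs ! j) ` J"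
    proof
      fix u assume u: "u \<in> {u. {vs!i,u}\<in>E} - set (take i vs)"
      then have uE: "{vs!i,u}\<in>E" by simp
      have "u \<in> V" using edge_facts[OF G uE] by simp
      then obtain j where j: "j < length vs" "u = vs ! j" using sV by (auto simp: in_set_conv_nth)
      have "j \<noteq> i" using edge_facts[OF G uE] j by auto
      moreover have "\<not> j < i"
      proof
        assume "j < i"
        then have "u \<in> set (take i vs)" using j by (auto simp: in_set_conv_nth intro!: exI[of _ j])
        then show False using u by simp
      qed
      ultimately have "j \<in> J" unfolding J_def using j uE by auto
      then show "u \<in> (\<lambda>j. vs ! j) ` J" using j by blast
    qed
    have "card ({u. {vs!i,u}\<in>E} - set (take i vs)) \<le> card ((\<lambda>j. vs ! j) ` J)"
      by (rule card_mono[OF finite_imageI[OF fJ] sub])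
    also have "\<dots> \<le> card J" by (rule card_image_le[OF fJ])
    also have "\<dots> \<le> k" using dg il unfolding J_def by auto
    finally show "card ({u. {ws!i,u}\<in>E} - {} - set (take i ws)) \<le> k" using e1 by simp
  qed
  have cov: "\<forall>e\<in>E. e \<inter> ({} \<union> set ws) \<noteq> {}" using C unfolding vertex_cover_def ws_def by simp
  have dws: "distinct ws" using dist unfolding ws_def by simp
  have sws: "set ws \<subseteq> V" using sV unfolding ws_def by (auto dest: in_set_takeD)
  obtain Xs where Xs: "length Xs = length ws" "\<forall>X\<in>set Xs. X \<subseteq> V \<and> card X \<le> k+1"
      "invert_seq Xs D1 = D2"
  proof -
    have "\<exists>Xs. length Xs = length ws \<and> (\<forall>X\<in>set Xs. X \<subseteq> V \<and> card X \<le> k+1)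
        \<and> invert_seq Xs D1 = D2"
      by (rule main_lemma[OF G]) (use deg cov o1 o2 dws sws in auto)
    then show ?thesis using that by (elim exE conjE) simp
  qed
  have lw: "length ws = l" using l unfolding ws_def by simp
  have "enat (length Xs) \<in> {enat (length Xs) | Xs.
      (\<forall>X\<in>set Xs. X \<subseteq> V \<and> card X \<le> p) \<and> invert_seq Xs D1 = D2}"
  proof -
    have "\<forall>X\<in>set Xs. X \<subseteq> V \<and> card X \<le> p" using Xs(2) p by fastforce
    then show ?thesis using Xs(3) by blast
  qed
  then have "inv_dist p V D1 D2 \<le> enat (length Xs)" unfolding inv_dist_def by (rule Inf_lower)
  then show "x \<le> enat l" using x Xs(1) lw by simp
qed

theorem mainTheorem16:
  fixes V :: "'a set" and E :: "'a set set" and vs :: "'a list" and k p :: nat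
  assumes "k \<ge> 1" and "p \<ge> k + 1"
    and "simple_graph V E"
    and "degenerate_ordering k V E vs"
  shows "(\<forall>l \<in> {1..length vs}. vertex_cover E (set (take l vs))
            \<longrightarrow> inv_diameter p V E \<le> enat l)
      \<and> (\<forall>(V' :: 'a set) E'. simple_graph V' E' \<and> k_degenerate k V' E'
            \<longrightarrow> inv_diameter p V' E' \<le> enat (card V' - 1))"
proof (intro conjI ballI allI impI)
  fix l assume "l \<in> {1..length vs}" "vertex_cover E (set (take l vs))"
  then show "inv_diameter p V E \<le> enat l" using diam_bound[OF assms(3,4,2)] by auto
next
  fix V' :: "'a set" and E' assume a: "simple_graph V' E' \<and> k_degenerate k V' E'"
  then obtain ws where O: "degenerate_ordering k V' E' ws" unfolding k_degenerate_def by blast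
  then have dist: "distinct ws" and sV: "set ws = V'" unfolding degenerate_ordering_def by auto
  have cardV: "card V' = length ws" using distinct_card[OF dist] sV by simp
  have cov: "vertex_cover E' (set (take (length ws - 1) ws))"
    unfolding vertex_cover_def
  proof
    fix e assume e: "e \<in> E'"
    then obtain u v where uv: "u \<noteq> v" "u \<in> V'" "v \<in> V'" "e = {u, v}"
      using a unfolding simple_graph_def by blast
    then have ne: "ws \<noteq> []" using sV by auto
    have tk: "take (length ws - 1) ws = butlast ws" by (simp add: butlast_conv_take)
    have "set ws = insert (last ws) (set (butlast ws))"
      using append_butlast_last_id[OF ne] by (metis list.simps(15) rotate1.simps(2) set_rotate1 set_append)
    then have "u \<in> set (butlast ws) \<or> v \<in> set (butlast ws)" using uv sV by auto
    then show "e \<inter> set (take (length ws - 1) ws) \<noteq> {}" using tk uv by auto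
  qed
  show "inv_diameter p V' E' \<le> enat (card V' - 1)"
    using diam_bound[OF _ O assms(2) _ cov] a cardV by simp
qed

end
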